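(* The following two identities hold. (i) For all smooth functions $\varrho,a,f$ on $\mathbb{R}^3$, $$\sum_{i_1,i_2,i_3,j_1,j_2,j_3,k_1,k_2,k_3=1}^{3}\varepsilon^{i_1i_2i_3}\varepsilon^{j_1j_2j_3}\varepsilon^{k_1k_2k_3}\,\varrho^2\,\frac{\partial^2\varrho}{\partial x^{i_2}\partial x^{j_1}}\,\frac{\partial^2 a}{\partial x^{i_3}\partial x^{k_1}}\,\frac{\partial^2 a}{\partial x^{j_3}\partial x^{k_2}}\,\frac{\partial^2 a}{\partial x^{j_2}\partial x^{k_3}}\,\frac{\partial f}{\partial x^{i_1}}=0.$$ (ii) For all smooth functions $\varrho,a^1,a^2,f$ on $\mathbb{R}^4$, $$\sum_{\text{all indices}=1}^{4}\varepsilon^{i_1i_2i_3i_4}\varepsilon^{j_1j_2j_3j_4}\varepsilon^{k_1k_2k_3k_4}\,\varrho^2\,\varrho_{i_2j_1}\,a^1_{i_3k_1}\,a^1_{j_3k_2}\,a^1_{j_2k_3}\,a^2_{i_4}\,a^2_{j_4}\,a^2_{k_4}\,f_{i_1}=0,$$ where lower indices denote partial derivatives, e.g. $\varrho_{ij}=\partial^2\varrho/\partial x^i\partial x^j$ and $a^2_{i}=\partial a^2/\partial x^i$. These are, respectively, the formula of the 3D Nambu micro-graph $(0,1,4;1,6,5;4,5,6)$ and of its embedding $(0,1,4,7;1,6,5,8;4,5,6,9)$ into 4D.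
   Context: $\varepsilon^{i_1\dots i_d}$ denotes the Levi-Civita symbol in dimension $d$, and $x^1,\dots,x^d$ are the coordinates on $\mathbb{R}^d$. All sums run over every repeated index from $1$ to $d$. The embedding of a micro-graph from dimension $d$ into dimension $d+1$ is defined as follows: - each Levi-Civita vertex gets one extra, last, outgoing edge to a new terminal vertex carrying a new Casimir function $a^{d-1}$; - all other edges are kept unchanged, with indices now ranging over $1,\dots,d+1$. *)

theory Defs
  imports "HOL-Analysis.Analysis" "HOL-Library.Numeral_Type"
begin

text \<open>Levi-Civita symbol in dimension d = CARD('n), indices in a finite linearly ordered
  type (for the numeral types 3, 4 the order is the standard one 0 < 1 < 2 (< 3),
  corresponding to coordinates x^1, x^2, x^3 (, x^4)).\<close>
definition levi_civita :: "('n::{finite,linorder}) list \<Rightarrow> real" where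
  "levi_civita is =
     (if length is = CARD('n) \<and> distinct is
      then (-1) ^ card {(a, b). a < b \<and> b < length is \<and> is ! b < is ! a}
      else 0)"

definition partial :: "'n::finite \<Rightarrow> (real ^ 'n \<Rightarrow> real) \<Rightarrow> real ^ 'n \<Rightarrow> real" where
  "partial i f = (\<lambda>x. deriv (\<lambda>t. f (x + t *\<^sub>R axis i 1)) 0)"

fun iter_partial :: "'n::finite list \<Rightarrow> (real ^ 'n \<Rightarrow> real) \<Rightarrow> real ^ 'n \<Rightarrow> real" where
  "iter_partial [] f = f"
| "iter_partial (i # is) f = partial i (iter_partial is f)"

definition smooth_fun :: "(real ^ 'n::finite \<Rightarrow> real) \<Rightarrow> bool" where
  "smooth_fun f \<longleftrightarrow> (\<forall>is x. iter_partial is f differentiable (at x))"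

end

theory Submission
  imports Defs
begin

lemma U4: "(UNIV::4 set) = {0,1,2,3}"
proof - have "(4::4)=0" by simp thus ?thesis using UNIV_4 by auto qed
lemma U3: "(UNIV::3 set) = {0,1,2}"
proof - have "(3::3)=0" by simp thus ?thesis using UNIV_3 by auto qed

lemma card_inv4: "card {(a,b). a<b \<and> b<(4::nat) \<and> P a b} =
  of_bool (P 0 1) + of_bool (P 0 2) + of_bool (P 0 3) + of_bool (P 1 2) + of_bool (P 1 3) + of_bool (P 2 3)"
proof -
  have "{(a,b). a<b \<and> b<(4::nat) \<and> P a b} = {(0,1),(0,2),(0,3),(1,2),(1,3),(2,3)} \<inter> {p. P (fst p) (snd p)}"
    by (auto simp: numeral_eq_Suc less_Suc_eq)
  then have "card {(a,b). a<b \<and> b<(4::nat) \<and> P a b} = (\<Sum>p\<in>{(0,1),(0,2),(0,3),(1,2),(1,3),(2,3)}. of_bool (P (fst p) (snd p)))"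
    by (subst sum_of_bool_eq) auto
  then show ?thesis by simp
qed

lemma card_inv3: "card {(a,b). a<b \<and> b<(3::nat) \<and> P a b} =
  of_bool (P 0 1) + of_bool (P 0 2) + of_bool (P 1 2)"
proof -
  have "{(a,b). a<b \<and> b<(3::nat) \<and> P a b} = {(0,1),(0,2),(1,2)} \<inter> {p. P (fst p) (snd p)}"
    by (auto simp: numeral_eq_Suc less_Suc_eq)
  then have "card {(a,b). a<b \<and> b<(3::nat) \<and> P a b} = (\<Sum>p\<in>{(0,1),(0,2),(1,2)}. of_bool (P (fst p) (snd p)))"
    by (subst sum_of_bool_eq) auto
  then show ?thesis by simp
qed

lemma levi4: "levi_civita [a,b,c,d::4] = (if distinct [a,b,c,d] then (-1)^(
  of_bool (b<a) + of_bool (c<a) + of_bool (d<a) + of_bool (c<b) + of_bool (d<b) + of_bool (d<c)) else 0)"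
  unfolding levi_civita_def using card_inv4[of "\<lambda>x y. [a,b,c,d]!y < [a,b,c,d]!x"]
  by (simp add: numeral_eq_Suc)

lemma levi3: "levi_civita [a,b,c::3] = (if distinct [a,b,c] then (-1)^(
  of_bool (b<a) + of_bool (c<a) + of_bool (c<b)) else 0)"
  unfolding levi_civita_def using card_inv3[of "\<lambda>x y. [a,b,c]!y < [a,b,c]!x"]
  by (simp add: numeral_eq_Suc)

lemma L3: "levi_civita [0,0,0::3] = 0"
  "levi_civita [0,0,1::3] = 0"
  "levi_civita [0,0,2::3] = 0"
  "levi_civita [0,1,0::3] = 0"
  "levi_civita [0,1,1::3] = 0"
  "levi_civita [0,1,2::3] = 1"
  "levi_civita [0,2,0::3] = 0"
  "levi_civita [0,2,1::3] = -1"
  "levi_civita [0,2,2::3] = 0"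
  "levi_civita [1,0,0::3] = 0"
  "levi_civita [1,0,1::3] = 0"
  "levi_civita [1,0,2::3] = -1"
  "levi_civita [1,1,0::3] = 0"
  "levi_civita [1,1,1::3] = 0"
  "levi_civita [1,1,2::3] = 0"
  "levi_civita [1,2,0::3] = 1"
  "levi_civita [1,2,1::3] = 0"
  "levi_civita [1,2,2::3] = 0"
  "levi_civita [2,0,0::3] = 0"
  "levi_civita [2,0,1::3] = 1"
  "levi_civita [2,0,2::3] = 0"
  "levi_civita [2,1,0::3] = -1"
  "levi_civita [2,1,1::3] = 0"
  "levi_civita [2,1,2::3] = 0"
  "levi_civita [2,2,0::3] = 0"
  "levi_civita [2,2,1::3] = 0"
  "levi_civita [2,2,2::3] = 0"
  by (simp_all add: levi3 less_bit1_def bit1.Rep_numeral bit1.Rep_1 bit1.Rep_0)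
lemma S3: "(\<Sum>x\<in>UNIV. F x) = F 0 + F 1 + F (2::3)" 
  unfolding U3 apply (subst sum.insert, simp, simp)+ apply (simp add: add.assoc) done
lemma S4: "(\<Sum>x\<in>UNIV. F x) = F 0 + F 1 + F 2 + F (3::4)"
  unfolding U4 apply (subst sum.insert, simp, simp)+ apply (simp add: add.assoc) done
lemma L4: "levi_civita [0,0,0,0::4] = 0"
  "levi_civita [0,0,0,1::4] = 0"
  "levi_civita [0,0,0,2::4] = 0"
  "levi_civita [0,0,0,3::4] = 0"
  "levi_civita [0,0,1,0::4] = 0"
  "levi_civita [0,0,1,1::4] = 0"
  "levi_civita [0,0,1,2::4] = 0"
  "levi_civita [0,0,1,3::4] = 0"
  "levi_civita [0,0,2,0::4] = 0"
  "levi_civita [0,0,2,1::4] = 0"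
  "levi_civita [0,0,2,2::4] = 0"
  "levi_civita [0,0,2,3::4] = 0"
  "levi_civita [0,0,3,0::4] = 0"
  "levi_civita [0,0,3,1::4] = 0"
  "levi_civita [0,0,3,2::4] = 0"
  "levi_civita [0,0,3,3::4] = 0"
  "levi_civita [0,1,0,0::4] = 0"
  "levi_civita [0,1,0,1::4] = 0"
  "levi_civita [0,1,0,2::4] = 0"
  "levi_civita [0,1,0,3::4] = 0"
  "levi_civita [0,1,1,0::4] = 0"
  "levi_civita [0,1,1,1::4] = 0"
  "levi_civita [0,1,1,2::4] = 0"
  "levi_civita [0,1,1,3::4] = 0"
  "levi_civita [0,1,2,0::4] = 0"
  "levi_civita [0,1,2,1::4] = 0"
  "levi_civita [0,1,2,2::4] = 0"
  "levi_civita [0,1,2,3::4] = 1"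
  "levi_civita [0,1,3,0::4] = 0"
  "levi_civita [0,1,3,1::4] = 0"
  "levi_civita [0,1,3,2::4] = -1"
  "levi_civita [0,1,3,3::4] = 0"
  "levi_civita [0,2,0,0::4] = 0"
  "levi_civita [0,2,0,1::4] = 0"
  "levi_civita [0,2,0,2::4] = 0"
  "levi_civita [0,2,0,3::4] = 0"
  "levi_civita [0,2,1,0::4] = 0"
  "levi_civita [0,2,1,1::4] = 0"
  "levi_civita [0,2,1,2::4] = 0"
  "levi_civita [0,2,1,3::4] = -1"
  "levi_civita [0,2,2,0::4] = 0"
  "levi_civita [0,2,2,1::4] = 0"
  "levi_civita [0,2,2,2::4] = 0"
  "levi_civita [0,2,2,3::4] = 0"
  "levi_civita [0,2,3,0::4] = 0"
  "levi_civita [0,2,3,1::4] = 1"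
  "levi_civita [0,2,3,2::4] = 0"
  "levi_civita [0,2,3,3::4] = 0"
  "levi_civita [0,3,0,0::4] = 0"
  "levi_civita [0,3,0,1::4] = 0"
  "levi_civita [0,3,0,2::4] = 0"
  "levi_civita [0,3,0,3::4] = 0"
  "levi_civita [0,3,1,0::4] = 0"
  "levi_civita [0,3,1,1::4] = 0"
  "levi_civita [0,3,1,2::4] = 1"
  "levi_civita [0,3,1,3::4] = 0"
  "levi_civita [0,3,2,0::4] = 0"
  "levi_civita [0,3,2,1::4] = -1"
  "levi_civita [0,3,2,2::4] = 0"
  "levi_civita [0,3,2,3::4] = 0"
  "levi_civita [0,3,3,0::4] = 0"
  "levi_civita [0,3,3,1::4] = 0"
  "levi_civita [0,3,3,2::4] = 0"
  "levi_civita [0,3,3,3::4] = 0"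
  "levi_civita [1,0,0,0::4] = 0"
  "levi_civita [1,0,0,1::4] = 0"
  "levi_civita [1,0,0,2::4] = 0"
  "levi_civita [1,0,0,3::4] = 0"
  "levi_civita [1,0,1,0::4] = 0"
  "levi_civita [1,0,1,1::4] = 0"
  "levi_civita [1,0,1,2::4] = 0"
  "levi_civita [1,0,1,3::4] = 0"
  "levi_civita [1,0,2,0::4] = 0"
  "levi_civita [1,0,2,1::4] = 0"
  "levi_civita [1,0,2,2::4] = 0"
  "levi_civita [1,0,2,3::4] = -1"
  "levi_civita [1,0,3,0::4] = 0"
  "levi_civita [1,0,3,1::4] = 0"
  "levi_civita [1,0,3,2::4] = 1"
  "levi_civita [1,0,3,3::4] = 0"
  "levi_civita [1,1,0,0::4] = 0"
  "levi_civita [1,1,0,1::4] = 0"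
  "levi_civita [1,1,0,2::4] = 0"
  "levi_civita [1,1,0,3::4] = 0"
  "levi_civita [1,1,1,0::4] = 0"
  "levi_civita [1,1,1,1::4] = 0"
  "levi_civita [1,1,1,2::4] = 0"
  "levi_civita [1,1,1,3::4] = 0"
  "levi_civita [1,1,2,0::4] = 0"
  "levi_civita [1,1,2,1::4] = 0"
  "levi_civita [1,1,2,2::4] = 0"
  "levi_civita [1,1,2,3::4] = 0"
  "levi_civita [1,1,3,0::4] = 0"
  "levi_civita [1,1,3,1::4] = 0"
  "levi_civita [1,1,3,2::4] = 0"
  "levi_civita [1,1,3,3::4] = 0"
  "levi_civita [1,2,0,0::4] = 0"
  "levi_civita [1,2,0,1::4] = 0"
  "levi_civita [1,2,0,2::4] = 0"
  "levi_civita [1,2,0,3::4] = 1"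
  "levi_civita [1,2,1,0::4] = 0"
  "levi_civita [1,2,1,1::4] = 0"
  "levi_civita [1,2,1,2::4] = 0"
  "levi_civita [1,2,1,3::4] = 0"
  "levi_civita [1,2,2,0::4] = 0"
  "levi_civita [1,2,2,1::4] = 0"
  "levi_civita [1,2,2,2::4] = 0"
  "levi_civita [1,2,2,3::4] = 0"
  "levi_civita [1,2,3,0::4] = -1"
  "levi_civita [1,2,3,1::4] = 0"
  "levi_civita [1,2,3,2::4] = 0"
  "levi_civita [1,2,3,3::4] = 0"
  "levi_civita [1,3,0,0::4] = 0"
  "levi_civita [1,3,0,1::4] = 0"
  "levi_civita [1,3,0,2::4] = -1"
  "levi_civita [1,3,0,3::4] = 0"
  "levi_civita [1,3,1,0::4] = 0"
  "levi_civita [1,3,1,1::4] = 0"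
  "levi_civita [1,3,1,2::4] = 0"
  "levi_civita [1,3,1,3::4] = 0"
  "levi_civita [1,3,2,0::4] = 1"
  "levi_civita [1,3,2,1::4] = 0"
  "levi_civita [1,3,2,2::4] = 0"
  "levi_civita [1,3,2,3::4] = 0"
  "levi_civita [1,3,3,0::4] = 0"
  "levi_civita [1,3,3,1::4] = 0"
  "levi_civita [1,3,3,2::4] = 0"
  "levi_civita [1,3,3,3::4] = 0"
  "levi_civita [2,0,0,0::4] = 0"
  "levi_civita [2,0,0,1::4] = 0"
  "levi_civita [2,0,0,2::4] = 0"
  "levi_civita [2,0,0,3::4] = 0"
  "levi_civita [2,0,1,0::4] = 0"
  "levi_civita [2,0,1,1::4] = 0"
  "levi_civita [2,0,1,2::4] = 0"
  "levi_civita [2,0,1,3::4] = 1"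
  "levi_civita [2,0,2,0::4] = 0"
  "levi_civita [2,0,2,1::4] = 0"
  "levi_civita [2,0,2,2::4] = 0"
  "levi_civita [2,0,2,3::4] = 0"
  "levi_civita [2,0,3,0::4] = 0"
  "levi_civita [2,0,3,1::4] = -1"
  "levi_civita [2,0,3,2::4] = 0"
  "levi_civita [2,0,3,3::4] = 0"
  "levi_civita [2,1,0,0::4] = 0"
  "levi_civita [2,1,0,1::4] = 0"
  "levi_civita [2,1,0,2::4] = 0"
  "levi_civita [2,1,0,3::4] = -1"
  "levi_civita [2,1,1,0::4] = 0"
  "levi_civita [2,1,1,1::4] = 0"
  "levi_civita [2,1,1,2::4] = 0"
  "levi_civita [2,1,1,3::4] = 0"
  "levi_civita [2,1,2,0::4] = 0"
  "levi_civita [2,1,2,1::4] = 0"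
  "levi_civita [2,1,2,2::4] = 0"
  "levi_civita [2,1,2,3::4] = 0"
  "levi_civita [2,1,3,0::4] = 1"
  "levi_civita [2,1,3,1::4] = 0"
  "levi_civita [2,1,3,2::4] = 0"
  "levi_civita [2,1,3,3::4] = 0"
  "levi_civita [2,2,0,0::4] = 0"
  "levi_civita [2,2,0,1::4] = 0"
  "levi_civita [2,2,0,2::4] = 0"
  "levi_civita [2,2,0,3::4] = 0"
  "levi_civita [2,2,1,0::4] = 0"
  "levi_civita [2,2,1,1::4] = 0"
  "levi_civita [2,2,1,2::4] = 0"
  "levi_civita [2,2,1,3::4] = 0"
  "levi_civita [2,2,2,0::4] = 0"
  "levi_civita [2,2,2,1::4] = 0"
  "levi_civita [2,2,2,2::4] = 0"
  "levi_civita [2,2,2,3::4] = 0"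
  "levi_civita [2,2,3,0::4] = 0"
  "levi_civita [2,2,3,1::4] = 0"
  "levi_civita [2,2,3,2::4] = 0"
  "levi_civita [2,2,3,3::4] = 0"
  "levi_civita [2,3,0,0::4] = 0"
  "levi_civita [2,3,0,1::4] = 1"
  "levi_civita [2,3,0,2::4] = 0"
  "levi_civita [2,3,0,3::4] = 0"
  "levi_civita [2,3,1,0::4] = -1"
  "levi_civita [2,3,1,1::4] = 0"
  "levi_civita [2,3,1,2::4] = 0"
  "levi_civita [2,3,1,3::4] = 0"
  "levi_civita [2,3,2,0::4] = 0"
  "levi_civita [2,3,2,1::4] = 0"
  "levi_civita [2,3,2,2::4] = 0"
  "levi_civita [2,3,2,3::4] = 0"
  "levi_civita [2,3,3,0::4] = 0"
  "levi_civita [2,3,3,1::4] = 0"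
  "levi_civita [2,3,3,2::4] = 0"
  "levi_civita [2,3,3,3::4] = 0"
  "levi_civita [3,0,0,0::4] = 0"
  "levi_civita [3,0,0,1::4] = 0"
  "levi_civita [3,0,0,2::4] = 0"
  "levi_civita [3,0,0,3::4] = 0"
  "levi_civita [3,0,1,0::4] = 0"
  "levi_civita [3,0,1,1::4] = 0"
  "levi_civita [3,0,1,2::4] = -1"
  "levi_civita [3,0,1,3::4] = 0"
  "levi_civita [3,0,2,0::4] = 0"
  "levi_civita [3,0,2,1::4] = 1"
  "levi_civita [3,0,2,2::4] = 0"
  "levi_civita [3,0,2,3::4] = 0"
  "levi_civita [3,0,3,0::4] = 0"
  "levi_civita [3,0,3,1::4] = 0"
  "levi_civita [3,0,3,2::4] = 0"
  "levi_civita [3,0,3,3::4] = 0"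
  "levi_civita [3,1,0,0::4] = 0"
  "levi_civita [3,1,0,1::4] = 0"
  "levi_civita [3,1,0,2::4] = 1"
  "levi_civita [3,1,0,3::4] = 0"
  "levi_civita [3,1,1,0::4] = 0"
  "levi_civita [3,1,1,1::4] = 0"
  "levi_civita [3,1,1,2::4] = 0"
  "levi_civita [3,1,1,3::4] = 0"
  "levi_civita [3,1,2,0::4] = -1"
  "levi_civita [3,1,2,1::4] = 0"
  "levi_civita [3,1,2,2::4] = 0"
  "levi_civita [3,1,2,3::4] = 0"
  "levi_civita [3,1,3,0::4] = 0"
  "levi_civita [3,1,3,1::4] = 0"
  "levi_civita [3,1,3,2::4] = 0"
  "levi_civita [3,1,3,3::4] = 0"
  "levi_civita [3,2,0,0::4] = 0"
  "levi_civita [3,2,0,1::4] = -1"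
  "levi_civita [3,2,0,2::4] = 0"
  "levi_civita [3,2,0,3::4] = 0"
  "levi_civita [3,2,1,0::4] = 1"
  "levi_civita [3,2,1,1::4] = 0"
  "levi_civita [3,2,1,2::4] = 0"
  "levi_civita [3,2,1,3::4] = 0"
  "levi_civita [3,2,2,0::4] = 0"
  "levi_civita [3,2,2,1::4] = 0"
  "levi_civita [3,2,2,2::4] = 0"
  "levi_civita [3,2,2,3::4] = 0"
  "levi_civita [3,2,3,0::4] = 0"
  "levi_civita [3,2,3,1::4] = 0"
  "levi_civita [3,2,3,2::4] = 0"
  "levi_civita [3,2,3,3::4] = 0"
  "levi_civita [3,3,0,0::4] = 0"
  "levi_civita [3,3,0,1::4] = 0"
  "levi_civita [3,3,0,2::4] = 0"
  "levi_civita [3,3,0,3::4] = 0"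
  "levi_civita [3,3,1,0::4] = 0"
  "levi_civita [3,3,1,1::4] = 0"
  "levi_civita [3,3,1,2::4] = 0"
  "levi_civita [3,3,1,3::4] = 0"
  "levi_civita [3,3,2,0::4] = 0"
  "levi_civita [3,3,2,1::4] = 0"
  "levi_civita [3,3,2,2::4] = 0"
  "levi_civita [3,3,2,3::4] = 0"
  "levi_civita [3,3,3,0::4] = 0"
  "levi_civita [3,3,3,1::4] = 0"
  "levi_civita [3,3,3,2::4] = 0"
  "levi_civita [3,3,3,3::4] = 0"
  by (simp_all add: levi4 less_bit0_def bit0.Rep_numeral bit0.Rep_1 bit0.Rep_0)
lemma E3: "(\<Sum>a\<in>UNIV. \<Sum>b\<in>UNIV. \<Sum>c\<in>UNIV. levi_civita [a,b,c::3] * g a b c) =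
  g 0 1 2 - g 0 2 1 - g 1 0 2 + g 1 2 0 + g 2 0 1 - g 2 1 0"
  unfolding S3 L3 by simp
lemma E4: "(\<Sum>a\<in>UNIV. \<Sum>b\<in>UNIV. \<Sum>c\<in>UNIV. \<Sum>d\<in>UNIV. levi_civita [a,b,c,d::4] * g a b c d) =
  g 0 1 2 3 - g 0 1 3 2 - g 0 2 1 3 + g 0 2 3 1 + g 0 3 1 2 - g 0 3 2 1 - g 1 0 2 3 + g 1 0 3 2 + g 1 2 0 3 - g 1 2 3 0 - g 1 3 0 2 + g 1 3 2 0 + g 2 0 1 3 - g 2 0 3 1 - g 2 1 0 3 + g 2 1 3 0 + g 2 3 0 1 - g 2 3 1 0 - g 3 0 1 2 + g 3 0 2 1 + g 3 1 0 2 - g 3 1 2 0 - g 3 2 0 1 + g 3 2 1 0"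
  unfolding S4 L4 by simp

lemma alg4:
  fixes R A :: "4 \<Rightarrow> 4 \<Rightarrow> real" and b f :: "4 \<Rightarrow> real" and c :: real
  assumes Rs: "\<And>p q. R p q = R q p"
  shows "(\<Sum>i1\<in>UNIV. \<Sum>i2\<in>UNIV. \<Sum>i3\<in>UNIV. \<Sum>i4\<in>UNIV.
            \<Sum>j1\<in>UNIV. \<Sum>j2\<in>UNIV. \<Sum>j3\<in>UNIV. \<Sum>j4\<in>UNIV.
            \<Sum>k1\<in>UNIV. \<Sum>k2\<in>UNIV. \<Sum>k3\<in>UNIV. \<Sum>k4\<in>UNIV.
        levi_civita [i1, i2, i3, i4] * levi_civita [j1, j2, j3, j4] *
        levi_civita [k1, k2, k3, k4] *
        c * R i2 j1 *
        A i3 k1 * A j3 k2 *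
        A j2 k3 *
        b i4 * b j4 * b k4 *
        f i1) = 0"
proof -
  define T where "T p q r = (\<Sum>k1\<in>UNIV. \<Sum>k2\<in>UNIV. \<Sum>k3\<in>UNIV. \<Sum>k4\<in>UNIV.
     levi_civita [k1, k2, k3, k4] * (A p k1 * A q k2 * A r k3 * b k4))" for p q r
  define U where "U p q = (\<Sum>j1\<in>UNIV. \<Sum>j2\<in>UNIV. \<Sum>j3\<in>UNIV. \<Sum>j4\<in>UNIV.
     levi_civita [j1, j2, j3, j4] * (R p j1 * T q j3 j2 * b j4))" for p q
  have step1: "(\<Sum>i1\<in>UNIV. \<Sum>i2\<in>UNIV. \<Sum>i3\<in>UNIV. \<Sum>i4\<in>UNIV.
            \<Sum>j1\<in>UNIV. \<Sum>j2\<in>UNIV. \<Sum>j3\<in>UNIV. \<Sum>j4\<in>UNIV.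
            \<Sum>k1\<in>UNIV. \<Sum>k2\<in>UNIV. \<Sum>k3\<in>UNIV. \<Sum>k4\<in>UNIV.
        levi_civita [i1, i2, i3, i4] * levi_civita [j1, j2, j3, j4] *
        levi_civita [k1, k2, k3, k4] *
        c * R i2 j1 *
        A i3 k1 * A j3 k2 *
        A j2 k3 *
        b i4 * b j4 * b k4 *
        f i1) = c * (\<Sum>i1\<in>UNIV. \<Sum>i2\<in>UNIV. \<Sum>i3\<in>UNIV. \<Sum>i4\<in>UNIV.
          levi_civita [i1, i2, i3, i4] * (f i1 * b i4 * U i2 i3))"
    unfolding U_def T_def by (simp add: sum_distrib_left mult_ac)
  have a1: "T p q r = - T q p r" for p q r
    unfolding T_def E4 by (simp add: algebra_simps)
  have a2: "T p q r = - T p r q" for p q r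
    unfolding T_def E4 by (simp add: algebra_simps)
  have a3: "T p q r = - T r q p" for p q r
    unfolding T_def E4 by (simp add: algebra_simps)
  have tf0: "T 0 0 0 = 0" using a1[of 0 0 0] by linarith
  have tf1: "T 0 0 1 = 0" using a1[of 0 0 1] by linarith
  have tf2: "T 0 0 2 = 0" using a1[of 0 0 2] by linarith
  have tf3: "T 0 0 3 = 0" using a1[of 0 0 3] by linarith
  have tf4: "T 0 1 0 = 0" using a3[of 0 1 0] by linarith
  have tf5: "T 0 1 1 = 0" using a2[of 0 1 1] by linarith
  have tf6: "T 0 2 0 = 0" using a3[of 0 2 0] by linarith
  have tf7: "T 0 2 1 = - T 0 1 2" using a2[of 0 2 1] by linarith
  have tf8: "T 0 2 2 = 0" using a2[of 0 2 2] by linarith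
  have tf9: "T 0 3 0 = 0" using a3[of 0 3 0] by linarith
  have tf10: "T 0 3 1 = - T 0 1 3" using a2[of 0 3 1] by linarith
  have tf11: "T 0 3 2 = - T 0 2 3" using a2[of 0 3 2] by linarith
  have tf12: "T 0 3 3 = 0" using a2[of 0 3 3] by linarith
  have tf13: "T 1 0 0 = 0" using a2[of 1 0 0] by linarith
  have tf14: "T 1 0 1 = 0" using a3[of 1 0 1] by linarith
  have tf15: "T 1 0 2 = - T 0 1 2" using a1[of 1 0 2] by linarith
  have tf16: "T 1 0 3 = - T 0 1 3" using a1[of 1 0 3] by linarith
  have tf17: "T 1 1 0 = 0" using a1[of 1 1 0] by linarith
  have tf18: "T 1 1 1 = 0" using a1[of 1 1 1] by linarith
  have tf19: "T 1 1 2 = 0" using a1[of 1 1 2] by linarith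
  have tf20: "T 1 1 3 = 0" using a1[of 1 1 3] by linarith
  have tf21: "T 1 2 0 = T 0 1 2" using a2[of 1 2 0] a1[of 1 0 2] by linarith
  have tf22: "T 1 2 1 = 0" using a3[of 1 2 1] by linarith
  have tf23: "T 1 2 2 = 0" using a2[of 1 2 2] by linarith
  have tf24: "T 1 3 0 = T 0 1 3" using a2[of 1 3 0] a1[of 1 0 3] by linarith
  have tf25: "T 1 3 1 = 0" using a3[of 1 3 1] by linarith
  have tf26: "T 1 3 2 = - T 1 2 3" using a2[of 1 3 2] by linarith
  have tf27: "T 1 3 3 = 0" using a2[of 1 3 3] by linarith
  have tf28: "T 2 0 0 = 0" using a2[of 2 0 0] by linarith
  have tf29: "T 2 0 1 = T 0 1 2" using a1[of 2 0 1] a2[of 0 2 1] by linarith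
  have tf30: "T 2 0 2 = 0" using a3[of 2 0 2] by linarith
  have tf31: "T 2 0 3 = - T 0 2 3" using a1[of 2 0 3] by linarith
  have tf32: "T 2 1 0 = - T 0 1 2" using a1[of 2 1 0] a2[of 1 2 0] a1[of 1 0 2] by linarith
  have tf33: "T 2 1 1 = 0" using a2[of 2 1 1] by linarith
  have tf34: "T 2 1 2 = 0" using a3[of 2 1 2] by linarith
  have tf35: "T 2 1 3 = - T 1 2 3" using a1[of 2 1 3] by linarith
  have tf36: "T 2 2 0 = 0" using a1[of 2 2 0] by linarith
  have tf37: "T 2 2 1 = 0" using a1[of 2 2 1] by linarith
  have tf38: "T 2 2 2 = 0" using a1[of 2 2 2] by linarith
  have tf39: "T 2 2 3 = 0" using a1[of 2 2 3] by linarith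
  have tf40: "T 2 3 0 = T 0 2 3" using a2[of 2 3 0] a1[of 2 0 3] by linarith
  have tf41: "T 2 3 1 = T 1 2 3" using a2[of 2 3 1] a1[of 2 1 3] by linarith
  have tf42: "T 2 3 2 = 0" using a3[of 2 3 2] by linarith
  have tf43: "T 2 3 3 = 0" using a2[of 2 3 3] by linarith
  have tf44: "T 3 0 0 = 0" using a2[of 3 0 0] by linarith
  have tf45: "T 3 0 1 = T 0 1 3" using a1[of 3 0 1] a2[of 0 3 1] by linarith
  have tf46: "T 3 0 2 = T 0 2 3" using a1[of 3 0 2] a2[of 0 3 2] by linarith
  have tf47: "T 3 0 3 = 0" using a3[of 3 0 3] by linarith
  have tf48: "T 3 1 0 = - T 0 1 3" using a1[of 3 1 0] a2[of 1 3 0] a1[of 1 0 3] by linarith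
  have tf49: "T 3 1 1 = 0" using a2[of 3 1 1] by linarith
  have tf50: "T 3 1 2 = T 1 2 3" using a1[of 3 1 2] a2[of 1 3 2] by linarith
  have tf51: "T 3 1 3 = 0" using a3[of 3 1 3] by linarith
  have tf52: "T 3 2 0 = - T 0 2 3" using a1[of 3 2 0] a2[of 2 3 0] a1[of 2 0 3] by linarith
  have tf53: "T 3 2 1 = - T 1 2 3" using a1[of 3 2 1] a2[of 2 3 1] a1[of 2 1 3] by linarith
  have tf54: "T 3 2 2 = 0" using a2[of 3 2 2] by linarith
  have tf55: "T 3 2 3 = 0" using a3[of 3 2 3] by linarith
  have tf56: "T 3 3 0 = 0" using a1[of 3 3 0] by linarith
  have tf57: "T 3 3 1 = 0" using a1[of 3 3 1] by linarith
  have tf58: "T 3 3 2 = 0" using a1[of 3 3 2] by linarith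
  have tf59: "T 3 3 3 = 0" using a1[of 3 3 3] by linarith
  note tf = tf0 tf1 tf2 tf3 tf4 tf5 tf6 tf7 tf8 tf9 tf10 tf11 tf12 tf13 tf14 tf15 tf16 tf17 tf18 tf19 tf20 tf21 tf22 tf23 tf24 tf25 tf26 tf27 tf28 tf29 tf30 tf31 tf32 tf33 tf34 tf35 tf36 tf37 tf38 tf39 tf40 tf41 tf42 tf43 tf44 tf45 tf46 tf47 tf48 tf49 tf50 tf51 tf52 tf53 tf54 tf55 tf56 tf57 tf58 tf59

  define v where "v s = (if s = 3 then T 0 1 2 else if s = 2 then - T 0 1 3 else if s = 1 then T 0 2 3 else - T 1 2 3)" for s :: 4
  define \<alpha> where "\<alpha> = -2 * (v 0 * b 0 + v 1 * b 1 + v 2 * b 2 + v 3 * b 3)"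
  define \<beta> where "\<beta> p = 2 * (R p 0 * v 0 + R p 1 * v 1 + R p 2 * v 2 + R p 3 * v 3)" for p
  have U: "U p q = \<alpha> * R p q + \<beta> p * b q" for p q
  proof -
    have "\<forall>p\<in>{0,1,2,3}. \<forall>q\<in>{0,1,2,3}. U p q = \<alpha> * R p q + \<beta> p * b q"
      unfolding U_def E4 \<alpha>_def \<beta>_def v_def by (simp add: tf algebra_simps)
    then show ?thesis unfolding U4[symmetric] by blast
  qed
  have Rs': "R 1 0 = R 0 1" "R 2 0 = R 0 2" "R 3 0 = R 0 3" "R 2 1 = R 1 2" "R 3 1 = R 1 3" "R 3 2 = R 2 3"
    using Rs by blast+
  have "(\<Sum>i1\<in>UNIV. \<Sum>i2\<in>UNIV. \<Sum>i3\<in>UNIV. \<Sum>i4\<in>UNIV.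
          levi_civita [i1, i2, i3, i4] * (f i1 * b i4 * U i2 i3)) = 0"
    unfolding U E4 by (simp add: Rs' algebra_simps)
  then show ?thesis using step1 by simp
qed

lemma alg3:
  fixes R A :: "3 \<Rightarrow> 3 \<Rightarrow> real" and f :: "3 \<Rightarrow> real" and c :: real
  assumes Rs: "\<And>p q. R p q = R q p"
  shows "(\<Sum>i1\<in>UNIV. \<Sum>i2\<in>UNIV. \<Sum>i3\<in>UNIV. \<Sum>j1\<in>UNIV. \<Sum>j2\<in>UNIV. \<Sum>j3\<in>UNIV.
            \<Sum>k1\<in>UNIV. \<Sum>k2\<in>UNIV. \<Sum>k3\<in>UNIV.
        levi_civita [i1, i2, i3] * levi_civita [j1, j2, j3] * levi_civita [k1, k2, k3] *
        c * R i2 j1 *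
        A i3 k1 * A j3 k2 * A j2 k3 *
        f i1) = 0"
proof -
  define T where "T p q r = (\<Sum>k1\<in>UNIV. \<Sum>k2\<in>UNIV. \<Sum>k3\<in>UNIV.
     levi_civita [k1, k2, k3] * (A p k1 * A q k2 * A r k3))" for p q r
  define U where "U p q = (\<Sum>j1\<in>UNIV. \<Sum>j2\<in>UNIV. \<Sum>j3\<in>UNIV.
     levi_civita [j1, j2, j3] * (R p j1 * T q j3 j2))" for p q
  have step1: "(\<Sum>i1\<in>UNIV. \<Sum>i2\<in>UNIV. \<Sum>i3\<in>UNIV. \<Sum>j1\<in>UNIV. \<Sum>j2\<in>UNIV. \<Sum>j3\<in>UNIV.
            \<Sum>k1\<in>UNIV. \<Sum>k2\<in>UNIV. \<Sum>k3\<in>UNIV.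
        levi_civita [i1, i2, i3] * levi_civita [j1, j2, j3] * levi_civita [k1, k2, k3] *
        c * R i2 j1 *
        A i3 k1 * A j3 k2 * A j2 k3 *
        f i1) = c * (\<Sum>i1\<in>UNIV. \<Sum>i2\<in>UNIV. \<Sum>i3\<in>UNIV.
          levi_civita [i1, i2, i3] * (f i1 * U i2 i3))"
    unfolding U_def T_def by (simp add: sum_distrib_left mult_ac)
  have a1: "T p q r = - T q p r" for p q r
    unfolding T_def E3 by (simp add: algebra_simps)
  have a2: "T p q r = - T p r q" for p q r
    unfolding T_def E3 by (simp add: algebra_simps)
  have a3: "T p q r = - T r q p" for p q r
    unfolding T_def E3 by (simp add: algebra_simps)
  have tf0: "T 0 0 0 = 0" using a1[of 0 0 0] by linarith
  have tf1: "T 0 0 1 = 0" using a1[of 0 0 1] by linarith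
  have tf2: "T 0 0 2 = 0" using a1[of 0 0 2] by linarith
  have tf3: "T 0 1 0 = 0" using a3[of 0 1 0] by linarith
  have tf4: "T 0 1 1 = 0" using a2[of 0 1 1] by linarith
  have tf5: "T 0 2 0 = 0" using a3[of 0 2 0] by linarith
  have tf6: "T 0 2 1 = - T 0 1 2" using a2[of 0 2 1] by linarith
  have tf7: "T 0 2 2 = 0" using a2[of 0 2 2] by linarith
  have tf8: "T 1 0 0 = 0" using a2[of 1 0 0] by linarith
  have tf9: "T 1 0 1 = 0" using a3[of 1 0 1] by linarith
  have tf10: "T 1 0 2 = - T 0 1 2" using a1[of 1 0 2] by linarith
  have tf11: "T 1 1 0 = 0" using a1[of 1 1 0] by linarith
  have tf12: "T 1 1 1 = 0" using a1[of 1 1 1] by linarith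
  have tf13: "T 1 1 2 = 0" using a1[of 1 1 2] by linarith
  have tf14: "T 1 2 0 = T 0 1 2" using a2[of 1 2 0] a1[of 1 0 2] by linarith
  have tf15: "T 1 2 1 = 0" using a3[of 1 2 1] by linarith
  have tf16: "T 1 2 2 = 0" using a2[of 1 2 2] by linarith
  have tf17: "T 2 0 0 = 0" using a2[of 2 0 0] by linarith
  have tf18: "T 2 0 1 = T 0 1 2" using a1[of 2 0 1] a2[of 0 2 1] by linarith
  have tf19: "T 2 0 2 = 0" using a3[of 2 0 2] by linarith
  have tf20: "T 2 1 0 = - T 0 1 2" using a1[of 2 1 0] a2[of 1 2 0] a1[of 1 0 2] by linarith
  have tf21: "T 2 1 1 = 0" using a2[of 2 1 1] by linarith
  have tf22: "T 2 1 2 = 0" using a3[of 2 1 2] by linarith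
  have tf23: "T 2 2 0 = 0" using a1[of 2 2 0] by linarith
  have tf24: "T 2 2 1 = 0" using a1[of 2 2 1] by linarith
  have tf25: "T 2 2 2 = 0" using a1[of 2 2 2] by linarith
  note tf = tf0 tf1 tf2 tf3 tf4 tf5 tf6 tf7 tf8 tf9 tf10 tf11 tf12 tf13 tf14 tf15 tf16 tf17 tf18 tf19 tf20 tf21 tf22 tf23 tf24 tf25

  define \<alpha> where "\<alpha> = -2 * T 0 1 2"
  have U: "U p q = \<alpha> * R p q" for p q
  proof -
    have "\<forall>p\<in>{0,1,2}. \<forall>q\<in>{0,1,2}. U p q = \<alpha> * R p q"
      unfolding U_def E3 \<alpha>_def by (simp add: tf algebra_simps)
    then show ?thesis unfolding U3[symmetric] by blast
  qed
  have Rs': "R 1 0 = R 0 1" "R 2 0 = R 0 2" "R 2 1 = R 1 2"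
    using Rs by blast+
  have "(\<Sum>i1\<in>UNIV. \<Sum>i2\<in>UNIV. \<Sum>i3\<in>UNIV.
          levi_civita [i1, i2, i3] * (f i1 * U i2 i3)) = 0"
    unfolding U E3 by (simp add: Rs' algebra_simps)
  then show ?thesis using step1 by simp
qed


lemma dir_deriv_frechet:
  fixes G :: "real^'n::finite \<Rightarrow> real"
  assumes "G differentiable (at (p + t0 *\<^sub>R e))"
  shows "((\<lambda>t. G (p + t *\<^sub>R e)) has_real_derivative (frechet_derivative G (at (p + t0 *\<^sub>R e)) e)) (at t0)"
proof -
  let ?D = "frechet_derivative G (at (p + t0 *\<^sub>R e))"
  have G': "(G has_derivative ?D) (at (p + t0 *\<^sub>R e))"
    using assms frechet_derivative_works by blast
  have lin: "((\<lambda>t. p + t *\<^sub>R e) has_derivative (\<lambda>h. h *\<^sub>R e)) (at t0)"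
    by (auto intro!: derivative_eq_intros)
  have "((G \<circ> (\<lambda>t. p + t *\<^sub>R e)) has_derivative (?D \<circ> (\<lambda>h. h *\<^sub>R e))) (at t0)"
    using diff_chain_at[OF lin G'] .
  moreover have "(?D \<circ> (\<lambda>h. h *\<^sub>R e)) = (\<lambda>h. ?D e * h)"
    using has_derivative_linear[OF G'] by (auto simp: fun_eq_iff linear_cmul)
  ultimately show ?thesis
    by (simp add: has_field_derivative_def o_def)
qed

lemma partial_frechet:
  fixes G :: "real^'n::finite \<Rightarrow> real"
  assumes "G differentiable (at y)"
  shows "partial k G y = frechet_derivative G (at y) (axis k 1)"
  unfolding partial_def
  using dir_deriv_frechet[of G y 0 "axis k 1"] assms by (simp add: DERIV_imp_deriv)

lemma dir_deriv:
  fixes G :: "real^'n::finite \<Rightarrow> real"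
  assumes "\<And>y. G differentiable (at y)"
  shows "((\<lambda>t. G (p + t *\<^sub>R axis k 1)) has_real_derivative partial k G (p + t0 *\<^sub>R axis k 1)) (at t0)"
  using dir_deriv_frechet[of G p t0 "axis k 1"] partial_frechet[of G _ k] assms by simp

lemma smooth_diff:
  assumes "smooth_fun f"
  shows "\<And>y. f differentiable (at y) \<and> partial i f differentiable (at y) \<and>
    partial j (partial i f) differentiable (at y)"
  using assms unfolding smooth_fun_def
  by (metis iter_partial.simps)

lemma mixed_mvt:
  fixes f :: "real^'n::finite \<Rightarrow> real"
  assumes sm: "smooth_fun f" and h: "h > 0"
  shows "\<exists>\<sigma> \<tau>. 0 < \<sigma> \<and> \<sigma> < h \<and> 0 < \<tau> \<and> \<tau> < h \<and>
    f (x + h *\<^sub>R axis i 1 + h *\<^sub>R axis j 1) - f (x + h *\<^sub>R axis i 1) - f (x + h *\<^sub>R axis j 1) + f x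
    = h^2 * partial j (partial i f) (x + \<sigma> *\<^sub>R axis i 1 + \<tau> *\<^sub>R axis j 1)"
proof -
  let ?ei = "axis i 1 :: real^'n" and ?ej = "axis j 1 :: real^'n"
  have d: "\<And>y. f differentiable (at y)" "\<And>y. partial i f differentiable (at y)"
    "\<And>y. partial j (partial i f) differentiable (at y)" using smooth_diff[OF sm, where i=i and j=j] by auto
  define \<phi> where "\<phi> s = f ((x + h *\<^sub>R ?ej) + s *\<^sub>R ?ei) - f (x + s *\<^sub>R ?ei)" for s
  have "\<And>s. 0 \<le> s \<Longrightarrow> s \<le> h \<Longrightarrow> (\<phi> has_real_derivative
      (partial i f ((x + h *\<^sub>R ?ej) + s *\<^sub>R ?ei) - partial i f (x + s *\<^sub>R ?ei))) (at s)"
    unfolding \<phi>_def by (intro DERIV_diff dir_deriv d)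
  from MVT2[OF h this] obtain \<sigma> where s: "0 < \<sigma>" "\<sigma> < h" and
    e1: "\<phi> h - \<phi> 0 = (h - 0) * (partial i f ((x + h *\<^sub>R ?ej) + \<sigma> *\<^sub>R ?ei) - partial i f (x + \<sigma> *\<^sub>R ?ei))"
    by blast
  define \<psi> where "\<psi> t = partial i f ((x + \<sigma> *\<^sub>R ?ei) + t *\<^sub>R ?ej)" for t
  have "\<And>t. 0 \<le> t \<Longrightarrow> t \<le> h \<Longrightarrow> (\<psi> has_real_derivative
      partial j (partial i f) ((x + \<sigma> *\<^sub>R ?ei) + t *\<^sub>R ?ej)) (at t)"
    unfolding \<psi>_def by (intro dir_deriv d)
  from MVT2[OF h this] obtain \<tau> where t: "0 < \<tau>" "\<tau> < h" and
    e2: "\<psi> h - \<psi> 0 = (h - 0) * partial j (partial i f) ((x + \<sigma> *\<^sub>R ?ei) + \<tau> *\<^sub>R ?ej)"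
    by blast
  have "f (x + h *\<^sub>R ?ei + h *\<^sub>R ?ej) - f (x + h *\<^sub>R ?ei) - f (x + h *\<^sub>R ?ej) + f x = \<phi> h - \<phi> 0"
    unfolding \<phi>_def by (simp add: add_ac)
  also have "\<dots> = h * (\<psi> h - \<psi> 0)"
    unfolding e1 \<psi>_def by (simp add: add_ac)
  also have "\<dots> = h^2 * partial j (partial i f) (x + \<sigma> *\<^sub>R ?ei + \<tau> *\<^sub>R ?ej)"
    unfolding e2 by (simp add: power2_eq_square)
  finally show ?thesis using s t by blast
qed

lemma schwarz:
  fixes f :: "real^'n::finite \<Rightarrow> real"
  assumes sm: "smooth_fun f"
  shows "partial i (partial j f) x = partial j (partial i f) x"
proof (rule ccontr)
  assume ne: "partial i (partial j f) x \<noteq> partial j (partial i f) x"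
  define \<epsilon> where "\<epsilon> = \<bar>partial i (partial j f) x - partial j (partial i f) x\<bar> / 2"
  have ep: "\<epsilon> > 0" using ne unfolding \<epsilon>_def by simp
  have c1: "continuous (at x) (partial j (partial i f))"
    using smooth_diff[OF sm, where i=i and j=j] differentiable_imp_continuous_within by blast
  have c2: "continuous (at x) (partial i (partial j f))"
    using smooth_diff[OF sm, where i=j and j=i] differentiable_imp_continuous_within by blast
  obtain d1 where d1: "d1 > 0" "\<And>y. dist y x < d1 \<Longrightarrow> dist (partial j (partial i f) y) (partial j (partial i f) x) < \<epsilon>"
    using c1 ep unfolding continuous_at_eps_delta by blast
  obtain d2 where d2: "d2 > 0" "\<And>y. dist y x < d2 \<Longrightarrow> dist (partial i (partial j f) y) (partial i (partial j f) x) < \<epsilon>"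
    using c2 ep unfolding continuous_at_eps_delta by blast
  define h where "h = min d1 d2 / 3"
  have h: "h > 0" using d1 d2 unfolding h_def by simp
  have close: "dist (x + s *\<^sub>R axis a 1 + t *\<^sub>R axis b 1) x < min d1 d2"
    if "0 < s" "s < h" "0 < t" "t < h" for s t and a b :: 'n
  proof -
    have "dist (x + s *\<^sub>R axis a 1 + t *\<^sub>R axis b 1) x = norm (s *\<^sub>R axis a 1 + t *\<^sub>R axis b 1 :: real^'n)"
      by (simp add: dist_norm)
    also have "\<dots> \<le> norm (s *\<^sub>R (axis a 1 :: real^'n)) + norm (t *\<^sub>R (axis b 1 :: real^'n))"
      by (rule norm_triangle_ineq)
    also have "\<dots> = s + t" using that by simp
    also have "\<dots> < min d1 d2" using that unfolding h_def by simp
    finally show ?thesis .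
  qed
  obtain s1 t1 where st1: "0 < s1" "s1 < h" "0 < t1" "t1 < h" and
    E1: "f (x + h *\<^sub>R axis i 1 + h *\<^sub>R axis j 1) - f (x + h *\<^sub>R axis i 1) - f (x + h *\<^sub>R axis j 1) + f x
    = h^2 * partial j (partial i f) (x + s1 *\<^sub>R axis i 1 + t1 *\<^sub>R axis j 1)"
    using mixed_mvt[OF sm h, of x i j] by blast
  obtain s2 t2 where st2: "0 < s2" "s2 < h" "0 < t2" "t2 < h" and
    E2: "f (x + h *\<^sub>R axis j 1 + h *\<^sub>R axis i 1) - f (x + h *\<^sub>R axis j 1) - f (x + h *\<^sub>R axis i 1) + f x
    = h^2 * partial i (partial j f) (x + s2 *\<^sub>R axis j 1 + t2 *\<^sub>R axis i 1)"
    using mixed_mvt[OF sm h, of x j i] by blast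
  have sw: "x + h *\<^sub>R axis j 1 + h *\<^sub>R axis i 1 = x + h *\<^sub>R axis i 1 + h *\<^sub>R axis j 1" by (simp add: add_ac)
  have "h^2 * partial j (partial i f) (x + s1 *\<^sub>R axis i 1 + t1 *\<^sub>R axis j 1)
     = h^2 * partial i (partial j f) (x + s2 *\<^sub>R axis j 1 + t2 *\<^sub>R axis i 1)"
    using E1 E2 unfolding sw by linarith
  then have eq: "partial j (partial i f) (x + s1 *\<^sub>R axis i 1 + t1 *\<^sub>R axis j 1)
     = partial i (partial j f) (x + s2 *\<^sub>R axis j 1 + t2 *\<^sub>R axis i 1)"
    using h by simp
  have "dist (partial j (partial i f) (x + s1 *\<^sub>R axis i 1 + t1 *\<^sub>R axis j 1)) (partial j (partial i f) x) < \<epsilon>"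
    using d1(2) close[OF st1] by simp
  moreover have "dist (partial i (partial j f) (x + s2 *\<^sub>R axis j 1 + t2 *\<^sub>R axis i 1)) (partial i (partial j f) x) < \<epsilon>"
    using d2(2) close[OF st2] by simp
  moreover have key: "\<And>P Q p q::real. \<bar>P - p\<bar> < \<bar>q - p\<bar> / 2 \<Longrightarrow> \<bar>Q - q\<bar> < \<bar>q - p\<bar> / 2 \<Longrightarrow> P = Q \<Longrightarrow> False"
    by (auto simp: abs_if split: if_splits)
  ultimately show False using eq unfolding \<epsilon>_def dist_real_def by (metis key)
qed
theorem mainTheorem2:
  shows "(\<forall>(\<rho>::real^3 \<Rightarrow> real) a f. smooth_fun \<rho> \<and> smooth_fun a \<and> smooth_fun f \<longrightarrow>
     (\<forall>x. (\<Sum>i1\<in>UNIV. \<Sum>i2\<in>UNIV. \<Sum>i3\<in>UNIV. \<Sum>j1\<in>UNIV. \<Sum>j2\<in>UNIV. \<Sum>j3\<in>UNIV.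
            \<Sum>k1\<in>UNIV. \<Sum>k2\<in>UNIV. \<Sum>k3\<in>UNIV.
        levi_civita [i1, i2, i3] * levi_civita [j1, j2, j3] * levi_civita [k1, k2, k3] *
        (\<rho> x)^2 * partial i2 (partial j1 \<rho>) x *
        partial i3 (partial k1 a) x * partial j3 (partial k2 a) x * partial j2 (partial k3 a) x *
        partial i1 f x) = 0))
   \<and>
   (\<forall>(\<rho>::real^4 \<Rightarrow> real) a1 a2 f.
      smooth_fun \<rho> \<and> smooth_fun a1 \<and> smooth_fun a2 \<and> smooth_fun f \<longrightarrow>
     (\<forall>x. (\<Sum>i1\<in>UNIV. \<Sum>i2\<in>UNIV. \<Sum>i3\<in>UNIV. \<Sum>i4\<in>UNIV.
            \<Sum>j1\<in>UNIV. \<Sum>j2\<in>UNIV. \<Sum>j3\<in>UNIV. \<Sum>j4\<in>UNIV.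
            \<Sum>k1\<in>UNIV. \<Sum>k2\<in>UNIV. \<Sum>k3\<in>UNIV. \<Sum>k4\<in>UNIV.
        levi_civita [i1, i2, i3, i4] * levi_civita [j1, j2, j3, j4] *
        levi_civita [k1, k2, k3, k4] *
        (\<rho> x)^2 * partial i2 (partial j1 \<rho>) x *
        partial i3 (partial k1 a1) x * partial j3 (partial k2 a1) x *
        partial j2 (partial k3 a1) x *
        partial i4 a2 x * partial j4 a2 x * partial k4 a2 x *
        partial i1 f x) = 0))"
proof (intro conjI allI impI)
  fix \<rho> a f :: "real^3 \<Rightarrow> real" and x
  assume sm: "smooth_fun \<rho> \<and> smooth_fun a \<and> smooth_fun f"
  show "(\<Sum>i1\<in>UNIV. \<Sum>i2\<in>UNIV. \<Sum>i3\<in>UNIV. \<Sum>j1\<in>UNIV. \<Sum>j2\<in>UNIV. \<Sum>j3\<in>UNIV.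
            \<Sum>k1\<in>UNIV. \<Sum>k2\<in>UNIV. \<Sum>k3\<in>UNIV.
        levi_civita [i1, i2, i3] * levi_civita [j1, j2, j3] * levi_civita [k1, k2, k3] *
        (\<rho> x)^2 * partial i2 (partial j1 \<rho>) x *
        partial i3 (partial k1 a) x * partial j3 (partial k2 a) x * partial j2 (partial k3 a) x *
        partial i1 f x) = 0"
    by (rule alg3) (use sm schwarz in blast)
next
  fix \<rho> a1 a2 f :: "real^4 \<Rightarrow> real" and x
  assume sm: "smooth_fun \<rho> \<and> smooth_fun a1 \<and> smooth_fun a2 \<and> smooth_fun f"
  show "(\<Sum>i1\<in>UNIV. \<Sum>i2\<in>UNIV. \<Sum>i3\<in>UNIV. \<Sum>i4\<in>UNIV.
            \<Sum>j1\<in>UNIV. \<Sum>j2\<in>UNIV. \<Sum>j3\<in>UNIV. \<Sum>j4\<in>UNIV.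
            \<Sum>k1\<in>UNIV. \<Sum>k2\<in>UNIV. \<Sum>k3\<in>UNIV. \<Sum>k4\<in>UNIV.
        levi_civita [i1, i2, i3, i4] * levi_civita [j1, j2, j3, j4] *
        levi_civita [k1, k2, k3, k4] *
        (\<rho> x)^2 * partial i2 (partial j1 \<rho>) x *
        partial i3 (partial k1 a1) x * partial j3 (partial k2 a1) x *
        partial j2 (partial k3 a1) x *
        partial i4 a2 x * partial j4 a2 x * partial k4 a2 x *
        partial i1 f x) = 0"
    by (rule alg4) (use sm schwarz in blast)
qed

end
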